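(* Let $\mathbf{X}$ be a set of discrete random variables with sample space $\Omega(\mathbf{X})$, and let $O$ be a positive unital circuit over $\mathbf{X}$. Then the family $\{O(\mathbf{x})\}_{\mathbf{x}\in\Omega(\mathbf{X})}$ is a positive operator-valued measure, i.e. each $O(\mathbf{x})$ is positive semi-definite and $\sum_{\mathbf{x}\in\Omega(\mathbf{X})}O(\mathbf{x})=\mathbb{1}$.
   Context: A positive operator-valued measure (POVM) is a finite family of PSD complex matrices summing to the identity matrix. A quantum operation from $d\times d$ to $d'\times d'$ complex matrices is a map $\Phi(A)=\sum_{j}K_jAK_j^*$ with $d'\times d$ matrices $K_j$ satisfying $\sum_j K_j^*K_j\le\mathbb{1}$ (Loewner order); it is unital if $\Phi(\mathbb{1}_d)=\mathbb{1}_{d'}$. A partition circuit over $\mathbf{X}=\{X_0,\dots,X_{N-1}\}$ is a rooted binary tree whose leaves are in bijection with the variables (leaf $k$ carries variable $X_k$ with finite sample space $\Omega(X_k)$); each internal unit $k$ has two children $k_l,k_r$; $\mathbf{x}_k$ denotes an assignment to the variables at the leaves below $k$. A positive operator circuit assigns to each leaf $k$ PSD matrices $E_{x_k}$, $x_k\in\Omega(X_k)$, and to each internal unit $k$ a quantum operation $\Phi_k$, and computes $O_k(\mathbf{x}_k)=E_{x_k}$ at leaves and $O_k(\mathbf{x}_k)=\Phi_k(O_{k_l}(\mathbf{x}_{k_l})\otimes O_{k_r}(\mathbf{x}_{k_r}))$ at internal units ($\otimes$ the Kronecker product); $O(\mathbf{x})=O_{\mathrm{root}}(\mathbf{x})$.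 It is a positive unital circuit if every $\Phi_k$ is unital (i.e. $\Phi_k(\mathbb{1}_{k_l}\otimes\mathbb{1}_{k_r})=\mathbb{1}_k$ with identity matrices of the appropriate sizes) and for every leaf $k$ the family $\{E_{x_k}\}_{x_k\in\Omega(X_k)}$ is a POVM. *)

theory Defs
  imports "Jordan_Normal_Form.Matrix"
begin

definition adj :: "complex mat \<Rightarrow> complex mat" where
  "adj A = mat (dim_col A) (dim_row A) (\<lambda>(i,j). cnj (A $$ (j,i)))"

definition msum :: "nat \<Rightarrow> ('i \<Rightarrow> complex mat) \<Rightarrow> 'i set \<Rightarrow> complex mat" where
  "msum d f S = mat d d (\<lambda>(i,j). \<Sum>x\<in>S. f x $$ (i,j))"

definition psd :: "nat \<Rightarrow> complex mat \<Rightarrow> bool" where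
  "psd d A \<longleftrightarrow> A \<in> carrier_mat d d \<and> adj A = A \<and>
     (\<forall>v :: nat \<Rightarrow> complex.
        Im (\<Sum>i<d. \<Sum>j<d. cnj (v i) * A $$ (i,j) * v j) = 0 \<and>
        Re (\<Sum>i<d. \<Sum>j<d. cnj (v i) * A $$ (i,j) * v j) \<ge> 0)"

definition loewner_le :: "nat \<Rightarrow> complex mat \<Rightarrow> complex mat \<Rightarrow> bool" where
  "loewner_le d A B \<longleftrightarrow> A \<in> carrier_mat d d \<and> B \<in> carrier_mat d d \<and> psd d (B - A)"

definition kron :: "complex mat \<Rightarrow> complex mat \<Rightarrow> complex mat" where
  "kron A B = mat (dim_row A * dim_row B) (dim_col A * dim_col B)
     (\<lambda>(i,j). A $$ (i div dim_row B, j div dim_col B) * B $$ (i mod dim_row B, j mod dim_col B))"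

definition povm :: "nat \<Rightarrow> ('i \<Rightarrow> complex mat) \<Rightarrow> 'i set \<Rightarrow> bool" where
  "povm d E S \<longleftrightarrow> finite S \<and> (\<forall>x\<in>S. psd d (E x)) \<and> msum d E S = 1\<^sub>m d"

definition kraus_apply :: "nat \<Rightarrow> complex mat list \<Rightarrow> complex mat \<Rightarrow> complex mat" where
  "kraus_apply d' Ks A = msum d' (\<lambda>j. Ks ! j * A * adj (Ks ! j)) {..<length Ks}"

definition quantum_op :: "nat \<Rightarrow> nat \<Rightarrow> complex mat list \<Rightarrow> bool" where
  "quantum_op d d' Ks \<longleftrightarrow> (\<forall>K\<in>set Ks. K \<in> carrier_mat d' d) \<and>
     loewner_le d (msum d (\<lambda>j. adj (Ks ! j) * Ks ! j) {..<length Ks}) (1\<^sub>m d)"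

text \<open>Leaf k d E: leaf carrying variable X_k, dimension d, effects E x for x in Omega(X_k).
  Node d Ks l r: internal unit of dimension d with Kraus operators Ks, children l r.\<close>
datatype 'a circ = Leaf nat nat "'a \<Rightarrow> complex mat"
                 | Node nat "complex mat list" "'a circ" "'a circ"

fun cdim :: "'a circ \<Rightarrow> nat" where
  "cdim (Leaf k d E) = d"
| "cdim (Node d Ks l r) = d"

fun leaves :: "'a circ \<Rightarrow> nat list" where
  "leaves (Leaf k d E) = [k]"
| "leaves (Node d Ks l r) = leaves l @ leaves r"

definition partition_circ :: "nat \<Rightarrow> 'a circ \<Rightarrow> bool" where
  "partition_circ N C \<longleftrightarrow> distinct (leaves C) \<and> set (leaves C) = {..<N}"

fun eval :: "'a circ \<Rightarrow> (nat \<Rightarrow> 'a) \<Rightarrow> complex mat" where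
  "eval (Leaf k d E) x = E (x k)"
| "eval (Node d Ks l r) x = kraus_apply d Ks (kron (eval l x) (eval r x))"

text \<open>Positive unital circuit (Omega k is the sample space of X_k).\<close>
fun pos_unital :: "(nat \<Rightarrow> 'a set) \<Rightarrow> 'a circ \<Rightarrow> bool" where
  "pos_unital \<Omega> (Leaf k d E) = povm d E (\<Omega> k)"
| "pos_unital \<Omega> (Node d Ks l r) =
     (quantum_op (cdim l * cdim r) d Ks \<and>
      kraus_apply d Ks (1\<^sub>m (cdim l * cdim r)) = 1\<^sub>m d \<and>
      pos_unital \<Omega> l \<and> pos_unital \<Omega> r)"

end

theory Submission
  imports Defs "HOL-Library.Complex_Order"
begin

definition fq :: "nat \<Rightarrow> (nat \<Rightarrow> nat \<Rightarrow> complex) \<Rightarrow> (nat \<Rightarrow> complex) \<Rightarrow> complex" where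
  "fq n A v = (\<Sum>i<n. \<Sum>j<n. cnj (v i) * A i j * v j)"

lemma sparse_sum:
  fixes g :: "nat \<Rightarrow> complex"
  assumes "i \<noteq> k" "i < n" "k < n"
  shows "(\<Sum>l<n. g l * (if l = i then x else if l = k then y else 0)) = g i * x + g k * y"
proof -
  have "(\<Sum>l<n. g l * (if l = i then x else if l = k then y else 0))
     = (\<Sum>l<n. (if l = i then g l * x else 0) + (if l = k then g l * y else 0))"
    using assms by (intro sum.cong) auto
  also have "\<dots> = g i * x + g k * y" using assms by (simp add: sum.distrib)
  finally show ?thesis .
qed

lemma fq_two:
  assumes "i \<noteq> k" "i < n" "k < n"
  shows "fq n A (\<lambda>l. if l = i then x else if l = k then y else 0)
    = cnj x * A i i * x + cnj x * A i k * y + cnj y * A k i * x + cnj y * A k k * y"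
proof -
  have e: "cnj (if l = i then x else if l = k then y else 0) = (if l = i then cnj x else if l = k then cnj y else 0)" for l
    by auto
  have "fq n A (\<lambda>l. if l = i then x else if l = k then y else 0)
     = (\<Sum>j<n. (\<Sum>l<n. A l j * (if l = i then cnj x else if l = k then cnj y else 0)) * (if j = i then x else if j = k then y else 0))"
    unfolding fq_def e
    by (subst sum.swap) (simp add: sum_distrib_left sum_distrib_right mult_ac)
  also have "\<dots> = (\<Sum>j<n. (A i j * cnj x + A k j * cnj y) * (if j = i then x else if j = k then y else 0))"
    using sparse_sum[OF assms] by simp
  also have "\<dots> = (A i i * cnj x + A k i * cnj y) * x + (A i k * cnj x + A k k * cnj y) * y"
    using sparse_sum[OF assms, of "\<lambda>j. A i j * cnj x + A k j * cnj y"] by simp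
  finally show ?thesis by (simp add: algebra_simps)
qed

lemma fq_one:
  assumes "i < n"
  shows "fq n A (\<lambda>l. if l = i then 1 else 0) = A i i"
  proof -
  have "fq n A (\<lambda>l. if l = i then 1 else 0) = (\<Sum>a<n. \<Sum>b<n. if a = i \<and> b = i then A a b else 0)"
    unfolding fq_def by (intro sum.cong refl) auto
  also have "\<dots> = (\<Sum>a<n. if a = i then A a i else 0)"
    by (intro sum.cong refl) (auto simp: assms)
  finally show ?thesis using assms by simp
qed

lemma fq_rank1_sub:
  "fq n (\<lambda>i j. A i j - u i * cnj (u j)) w = fq n A w - (\<Sum>i<n. cnj (w i) * u i) * cnj (\<Sum>j<n. cnj (w j) * u j)"
  by (simp add: fq_def algebra_simps sum_subtractf sum_product)

lemma fq_Suc_zero: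
  assumes "\<forall>i\<le>n. A i n = 0" "\<forall>j\<le>n. A n j = 0"
  shows "fq (Suc n) A v = fq n A v"
  using assms by (simp add: fq_def lessThan_Suc sum.distrib)

lemma zero_col:
  assumes herm: "\<forall>i<n. \<forall>j<n. A i j = cnj (A j i)" and pos: "\<forall>v. 0 \<le> fq n A v"
    and k: "k < n" "A k k = 0" and i: "i < n"
  shows "A i k = 0"
proof (rule ccontr)
  assume a0: "A i k \<noteq> 0"
  then have ik: "i \<noteq> k" using k by auto
  define a where "a = A i k"
  have "0 \<le> A i i" using pos[rule_format, of "\<lambda>l. if l = i then 1 else 0"] fq_one[OF i, of A] by simp
  then obtain p where p: "A i i = complex_of_real p" "p \<ge> 0"
    by (intro that[of "Re (A i i)"]) (auto simp: less_eq_complex_def complex_eq_iff)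
  define r where "r = 1 / (p + 1)"
  have r: "r > 0" "r * p < 1" using p unfolding r_def by (simp_all add: field_simps)
  define x where "x = - complex_of_real r * a"
  have aki: "A k i = cnj a" using herm[rule_format, OF k(1) i] unfolding a_def .
  have "fq n A (\<lambda>l. if l = i then x else if l = k then 1 else 0)
     = cnj x * A i i * x + cnj x * a + cnj a * x"
    using fq_two[OF ik i k(1), of A x 1] unfolding k(2) aki a_def[symmetric] by simp
  also have "\<dots> = complex_of_real (r * (cmod a)^2 * (r * p - 2))"
  proof -
    have cx: "cnj x = - complex_of_real r * cnj a" by (simp add: x_def)
    have "cnj x * A i i * x + cnj x * a + cnj a * x
       = (complex_of_real r * complex_of_real r * complex_of_real p - 2 * complex_of_real r) * (cnj a * a)"
      unfolding cx p(1) x_def by (simp add: algebra_simps)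
    also have "cnj a * a = complex_of_real ((cmod a)^2)"
      by (metis complex_norm_square mult.commute of_real_power)
    also have "(complex_of_real r * complex_of_real r * complex_of_real p - 2 * complex_of_real r) * complex_of_real ((cmod a)^2)
      = complex_of_real ((r * r * p - 2 * r) * (cmod a)^2)" by simp
    also have "(r * r * p - 2 * r) * (cmod a)^2 = r * (cmod a)^2 * (r * p - 2)"
      by (simp add: algebra_simps)
    finally show ?thesis .
  qed
  moreover have "0 \<le> fq n A (\<lambda>l. if l = i then x else if l = k then 1 else 0)" using pos by blast
  ultimately have "0 \<le> complex_of_real (r * (cmod a)^2 * (r * p - 2))"
    by simp
  moreover have "r * (cmod a)^2 > 0" using r a0 a_def by simp
  moreover have "r * p - 2 < 0" using r by simp
  ultimately have "r * (cmod a)^2 * (r * p - 2) < 0 \<and> 0 \<le> r * (cmod a)^2 * (r * p - 2)"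
    using mult_pos_neg[of "r * (cmod a)^2" "r * p - 2"] unfolding less_eq_complex_def by simp
  then show False by linarith
qed

lemma fq_cong:
  assumes "\<forall>i<n. v i = w i"
  shows "fq n A v = fq n A w"
  unfolding fq_def using assms by (intro sum.cong refl) auto

lemma chol_step:
  assumes herm: "\<forall>i<Suc d. \<forall>j<Suc d. A i j = cnj (A j i)" and pos: "\<forall>v. 0 \<le> fq (Suc d) A v"
  obtains u where
    "\<forall>i<Suc d. \<forall>j<Suc d. A i j - u i * cnj (u j) = cnj (A j i - u j * cnj (u i))"
    "\<forall>v. 0 \<le> fq (Suc d) (\<lambda>i j. A i j - u i * cnj (u j)) v"
    "\<forall>i\<le>d. A i d - u i * cnj (u d) = 0" "\<forall>j\<le>d. A d j - u d * cnj (u j) = 0"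
proof (cases "A d d = 0")
  case True
  have c: "A i d = 0" if "i \<le> d" for i
    using zero_col[OF herm pos _ True] that by simp
  have r: "A d j = 0" if "j \<le> d" for j
    using herm[rule_format, of d j] c[OF that] that by simp
  have e3: "A i j - 0 * cnj 0 = A i j" for i j by simp
  show ?thesis
  proof (rule that[of "\<lambda>_. 0"], unfold e3)
    show "\<forall>i<Suc d. \<forall>j<Suc d. A i j = cnj (A j i)" by (rule herm)
    show "\<forall>v. 0 \<le> fq (Suc d) (\<lambda>i j. A i j) v" using pos by simp
    show "\<forall>i\<le>d. A i d = 0" using c by blast
    show "\<forall>j\<le>d. A d j = 0" using r by blast
  qed
next
  case False
  have "0 \<le> A d d" using pos[rule_format, of "\<lambda>l. if l = d then 1 else 0"] fq_one[of d "Suc d" A] by simp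
  then obtain c where c: "A d d = complex_of_real c" "c > 0"
    using False by (intro that[of "Re (A d d)"]) (auto simp: less_eq_complex_def complex_eq_iff)
  define s where "s = sqrt c"
  have s: "s > 0" "s * s = c" using c by (auto simp: s_def)
  define u where "u i = A i d / complex_of_real s" for i
  have ud: "u d = complex_of_real s"
    using s unfolding u_def c(1) by (simp add: field_simps flip: of_real_mult)
  have cud: "cnj (u d) = complex_of_real s" using ud by simp
  define B where "B i j = A i j - u i * cnj (u j)" for i j
  have col: "\<forall>i\<le>d. B i d = 0"
  proof (intro allI impI)
    fix i assume "i \<le> d"
    have "u i * cnj (u d) = A i d" using s unfolding u_def cud
      using c(2) by (simp add: field_simps c(1) flip: of_real_mult)
    then show "B i d = 0" by (simp add: B_def)
  qed
  have row: "\<forall>j\<le>d. B d j = 0"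
  proof (intro allI impI)
    fix j assume j: "j \<le> d"
    have "u d * cnj (u j) = cnj (A j d)" using s c(2) unfolding u_def
      by (simp add: field_simps c(1) flip: of_real_mult)
    also have "\<dots> = A d j" using herm[rule_format, of d j] j by simp
    finally show "B d j = 0" by (simp add: B_def)
  qed
  have hermB: "\<forall>i<Suc d. \<forall>j<Suc d. B i j = cnj (B j i)"
  proof (intro allI impI)
    fix i j assume "i < Suc d" "j < Suc d"
    then have "A i j = cnj (A j i)" using herm by blast
    then show "B i j = cnj (B j i)" by (simp add: B_def)
  qed
  have posB: "0 \<le> fq (Suc d) B v" for v
  proof -
    define t where "t = (\<Sum>i<d. cnj (v i) * u i)"
    define w where "w = v(d := - cnj t / complex_of_real s)"
    have wt: "(\<Sum>i<Suc d. cnj (w i) * u i) = 0"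
    proof -
      have "(\<Sum>i<Suc d. cnj (w i) * u i) = t + cnj (w d) * u d"
        unfolding t_def w_def by (simp add: lessThan_Suc)
      also have "cnj (w d) * u d = - t" using s unfolding w_def ud by simp
      finally show ?thesis by simp
    qed
    have "fq (Suc d) B v = fq d B v" by (rule fq_Suc_zero[OF col row])
    also have "\<dots> = fq d B w" by (rule fq_cong) (simp add: w_def)
    also have "\<dots> = fq (Suc d) B w" by (rule fq_Suc_zero[OF col row, symmetric])
    also have "\<dots> = fq (Suc d) A w" unfolding B_def fq_rank1_sub wt by simp
    finally show ?thesis using pos by simp
  qed
  have e: "(\<lambda>i j. A i j - u i * cnj (u j)) = B" by (simp add: B_def fun_eq_iff)
  have e2: "A i j - u i * cnj (u j) = B i j" for i j by (simp add: B_def)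
  show ?thesis
    by (rule that[of u], unfold e e2) (use hermB posB col row in blast)+
qed

lemma chol:
  assumes "\<forall>i<d. \<forall>j<d. A i j = cnj (A j i)" "\<forall>v. 0 \<le> fq d A v"
  shows "\<exists>\<alpha>. \<forall>i<d. \<forall>j<d. A i j = (\<Sum>m<d. \<alpha> m i * cnj (\<alpha> m j))"
  using assms
proof (induction d arbitrary: A)
  case 0
  then show ?case by auto
next
  case (Suc d)
  obtain u where u: "\<forall>i<Suc d. \<forall>j<Suc d. A i j - u i * cnj (u j) = cnj (A j i - u j * cnj (u i))"
    "\<forall>v. 0 \<le> fq (Suc d) (\<lambda>i j. A i j - u i * cnj (u j)) v"
    "\<forall>i\<le>d. A i d - u i * cnj (u d) = 0" "\<forall>j\<le>d. A d j - u d * cnj (u j) = 0"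
    using chol_step[OF Suc.prems] by blast
  define B where "B i j = A i j - u i * cnj (u j)" for i j
  have hB: "\<forall>i<d. \<forall>j<d. B i j = cnj (B j i)" unfolding B_def using u(1) less_SucI by blast
  have eB: "(\<lambda>i j. A i j - u i * cnj (u j)) = B" by (simp add: B_def fun_eq_iff)
  have col: "\<forall>i\<le>d. B i d = 0" and row: "\<forall>j\<le>d. B d j = 0" using u(3,4) by (simp_all add: B_def)
  have pB: "\<forall>v. 0 \<le> fq d B v"
    using u(2) unfolding eB fq_Suc_zero[OF col row] .
  obtain \<beta> where \<beta>: "\<forall>i<d. \<forall>j<d. B i j = (\<Sum>m<d. \<beta> m i * cnj (\<beta> m j))"
    using Suc.IH[OF hB pB] by blast
  define \<alpha> where "\<alpha> m i = (if m = d then u i else if i = d then 0 else \<beta> m i)" for m i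
  show ?case
  proof (intro exI allI impI)
    fix i j assume i: "i < Suc d" and j: "j < Suc d"
    have "(\<Sum>m<Suc d. \<alpha> m i * cnj (\<alpha> m j)) = u i * cnj (u j) + (\<Sum>m<d. \<alpha> m i * cnj (\<alpha> m j))"
      by (simp add: lessThan_Suc \<alpha>_def)
    also have "(\<Sum>m<d. \<alpha> m i * cnj (\<alpha> m j)) = B i j"
    proof (cases "i = d \<or> j = d")
      case True
      then have "B i j = 0" using col row i j by auto
      moreover have "(\<Sum>m<d. \<alpha> m i * cnj (\<alpha> m j)) = 0"
        using True by (intro sum.neutral) (auto simp: \<alpha>_def)
      ultimately show ?thesis by simp
    next
      case False
      then have "i < d" "j < d" using i j by auto
      then show ?thesis using \<beta> False by (auto simp: \<alpha>_def intro!: sum.cong)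
    qed
    finally show "A i j = (\<Sum>m<Suc d. \<alpha> m i * cnj (\<alpha> m j))" by (simp add: B_def)
  qed
qed

lemma adj_carrier: "A \<in> carrier_mat m n \<Longrightarrow> adj A \<in> carrier_mat n m"
  by (simp add: adj_def)

lemma adj_index: "i < dim_col A \<Longrightarrow> j < dim_row A \<Longrightarrow> adj A $$ (i,j) = cnj (A $$ (j,i))"
  by (simp add: adj_def)

lemma nonneg_c: "(0::complex) \<le> z \<longleftrightarrow> Im z = 0 \<and> 0 \<le> Re z"
  by (auto simp: less_eq_complex_def)

lemma psd_iff:
  "psd d A \<longleftrightarrow> A \<in> carrier_mat d d \<and> (\<forall>i<d. \<forall>j<d. A $$ (i,j) = cnj (A $$ (j,i))) \<and>
      (\<forall>v. 0 \<le> fq d (\<lambda>i j. A $$ (i,j)) v)"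
proof -
  have 1: "psd d A \<longleftrightarrow> A \<in> carrier_mat d d \<and> adj A = A \<and> (\<forall>v. 0 \<le> fq d (\<lambda>i j. A $$ (i,j)) v)"
    unfolding psd_def fq_def nonneg_c by blast
  have 2: "adj A = A \<longleftrightarrow> (\<forall>i<d. \<forall>j<d. A $$ (i,j) = cnj (A $$ (j,i)))" if A: "A \<in> carrier_mat d d"
  proof
    assume "adj A = A"
    then have "A $$ (i,j) = cnj (A $$ (j,i))" if "i < d" "j < d" for i j
      using A that adj_index[of i A j] by (metis carrier_matD(1) carrier_matD(2))
    then show "\<forall>i<d. \<forall>j<d. A $$ (i,j) = cnj (A $$ (j,i))" by blast
  next
    assume h: "\<forall>i<d. \<forall>j<d. A $$ (i,j) = cnj (A $$ (j,i))"
    show "adj A = A"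
    proof (rule eq_matI)
      fix i j assume "i < dim_row A" "j < dim_col A"
      then have ij: "i < d" "j < d" using A by auto
      have "adj A $$ (i,j) = cnj (A $$ (j,i))" using adj_index[of i A j] A ij by simp
      also have "\<dots> = A $$ (i,j)" using h[rule_format, OF ij] by simp
      finally show "adj A $$ (i,j) = A $$ (i,j)" .
    qed (use A in \<open>auto simp: adj_def\<close>)
  qed
  show ?thesis using 1 2 by blast
qed

lemma msum_carrier[simp]: "msum d f S \<in> carrier_mat d d"
  by (simp add: msum_def)

lemma msum_index: "i < d \<Longrightarrow> j < d \<Longrightarrow> msum d f S $$ (i,j) = (\<Sum>x\<in>S. f x $$ (i,j))"
  by (simp add: msum_def)

lemma fq_sum: "fq n (\<lambda>i j. \<Sum>x\<in>S. F x i j) v = (\<Sum>x\<in>S. fq n (F x) v)"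
  unfolding fq_def by (simp add: sum_distrib_left sum_distrib_right sum.swap[where B=S])

lemma fq_cong_mat:
  assumes "\<forall>i<n. \<forall>j<n. A i j = B i j"
  shows "fq n A v = fq n B v"
  unfolding fq_def using assms by (intro sum.cong refl) auto

lemma psd_msum:
  assumes "\<forall>x\<in>S. psd d (f x)"
  shows "psd d (msum d f S)"
  unfolding psd_iff
proof (intro conjI allI impI)
  show "msum d f S \<in> carrier_mat d d" by simp
  fix i j assume i: "i < d" and j: "j < d"
  have h: "\<forall>x\<in>S. f x $$ (i,j) = cnj (f x $$ (j,i))" using assms i j unfolding psd_iff by blast
  have "(\<Sum>x\<in>S. f x $$ (i,j)) = (\<Sum>x\<in>S. cnj (f x $$ (j,i)))" by (rule sum.cong[OF refl]) (use h in blast)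
  then show "msum d f S $$ (i,j) = cnj (msum d f S $$ (j,i))"
    using i j by (simp add: msum_index)
next
  fix v
  have "fq d (\<lambda>i j. msum d f S $$ (i,j)) v = fq d (\<lambda>i j. \<Sum>x\<in>S. f x $$ (i,j)) v"
    by (rule fq_cong_mat) (simp add: msum_index)
  also have "\<dots> = (\<Sum>x\<in>S. fq d (\<lambda>i j. f x $$ (i,j)) v)" by (rule fq_sum)
  also have "0 \<le> \<dots>" using assms unfolding psd_iff by (intro sum_nonneg) blast
  finally show "0 \<le> fq d (\<lambda>i j. msum d f S $$ (i,j)) v" .
qed

lemma conj_index:
  assumes K: "K \<in> carrier_mat d n" and A: "A \<in> carrier_mat n n" and i: "i < d" and j: "j < d"
  shows "(K * A * adj K) $$ (i,j) = (\<Sum>p<n. \<Sum>q<n. K $$ (i,p) * A $$ (p,q) * cnj (K $$ (j,q)))"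
proof -
  have KA: "K * A \<in> carrier_mat d n" using K A by simp
  have "(K * A * adj K) $$ (i,j) = row (K * A) i \<bullet> col (adj K) j"
    using KA adj_carrier[OF K] i j by (intro index_mult_mat) auto
  also have "\<dots> = (\<Sum>q<n. (K * A) $$ (i,q) * cnj (K $$ (j,q)))"
    unfolding scalar_prod_def using KA adj_carrier[OF K] K i j
    by (intro sum.cong) (auto simp: adj_index)
  also have "\<dots> = (\<Sum>q<n. (\<Sum>p<n. K $$ (i,p) * A $$ (p,q)) * cnj (K $$ (j,q)))"
  proof (intro sum.cong refl)
    fix q assume q: "q \<in> {..<n}"
    have "(K * A) $$ (i,q) = row K i \<bullet> col A q" using K A i q by (intro index_mult_mat) auto
    also have "\<dots> = (\<Sum>p<n. K $$ (i,p) * A $$ (p,q))"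
      unfolding scalar_prod_def using K A i q by (intro sum.cong) auto
    finally show "(K * A) $$ (i,q) * cnj (K $$ (j,q)) = (\<Sum>p<n. K $$ (i,p) * A $$ (p,q)) * cnj (K $$ (j,q))" by simp
  qed
  also have "\<dots> = (\<Sum>q<n. \<Sum>p<n. K $$ (i,p) * A $$ (p,q) * cnj (K $$ (j,q)))"
    by (simp add: sum_distrib_right)
  also have "\<dots> = (\<Sum>p<n. \<Sum>q<n. K $$ (i,p) * A $$ (p,q) * cnj (K $$ (j,q)))"
    by (rule sum.swap)
  finally show ?thesis .
qed

lemma conj_carrier: "K \<in> carrier_mat d n \<Longrightarrow> A \<in> carrier_mat n n \<Longrightarrow> K * A * adj K \<in> carrier_mat d d"
  by (meson adj_carrier mult_carrier_mat)

lemma psd_conj: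
  assumes A: "psd n A" and K: "K \<in> carrier_mat d n"
  shows "psd d (K * A * adj K)"
proof -
  have Ac: "A \<in> carrier_mat n n" and hA: "\<forall>i<n. \<forall>j<n. A $$ (i,j) = cnj (A $$ (j,i))"
    and pA: "\<forall>v. 0 \<le> fq n (\<lambda>i j. A $$ (i,j)) v" using A unfolding psd_iff by blast+
  show ?thesis unfolding psd_iff
  proof (intro conjI allI impI)
    show "K * A * adj K \<in> carrier_mat d d" using K Ac by (rule conj_carrier)
  next
    fix i j assume i: "i < d" and j: "j < d"
    have "cnj ((K * A * adj K) $$ (j,i)) = (\<Sum>p<n. \<Sum>q<n. cnj (K $$ (j,p)) * cnj (A $$ (p,q)) * K $$ (i,q))"
      by (simp add: conj_index[OF K Ac j i])
    also have "\<dots> = (\<Sum>p<n. \<Sum>q<n. cnj (K $$ (j,p)) * A $$ (q,p) * K $$ (i,q))"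
    proof (intro sum.cong refl)
      fix p q assume "p \<in> {..<n}" "q \<in> {..<n}"
      then have "A $$ (q,p) = cnj (A $$ (p,q))" using hA by blast
      then show "cnj (K $$ (j,p)) * cnj (A $$ (p,q)) * K $$ (i,q) = cnj (K $$ (j,p)) * A $$ (q,p) * K $$ (i,q)" by simp
    qed
    also have "\<dots> = (\<Sum>q<n. \<Sum>p<n. cnj (K $$ (j,p)) * A $$ (q,p) * K $$ (i,q))"
      by (rule sum.swap)
    also have "\<dots> = (K * A * adj K) $$ (i,j)"
      by (simp add: conj_index[OF K Ac i j] mult_ac)
    finally show "(K * A * adj K) $$ (i,j) = cnj ((K * A * adj K) $$ (j,i))" by simp
  next
    fix v
    define w where "w q = (\<Sum>i<d. cnj (K $$ (i,q)) * v i)" for q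
    have "fq d (\<lambda>i j. (K * A * adj K) $$ (i,j)) v
        = fq d (\<lambda>i j. \<Sum>p<n. \<Sum>q<n. K $$ (i,p) * A $$ (p,q) * cnj (K $$ (j,q))) v"
      by (rule fq_cong_mat) (simp add: conj_index[OF K Ac])
    also have "\<dots> = fq n (\<lambda>i j. A $$ (i,j)) w"
      unfolding fq_def w_def
      by (simp add: sum_distrib_left sum_distrib_right sum.swap[where A="{..<n}" and B="{..<d}"] mult_ac)
    also have "0 \<le> \<dots>" using pA by blast
    finally show "0 \<le> fq d (\<lambda>i j. (K * A * adj K) $$ (i,j)) v" .
  qed
qed

lemma psd_kraus:
  assumes "\<forall>K\<in>set Ks. K \<in> carrier_mat d n" "psd n A"
  shows "psd d (kraus_apply d Ks A)"
  unfolding kraus_apply_def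
  by (rule psd_msum) (use assms in \<open>auto intro!: psd_conj\<close>)

lemma sum_pair_index:
  fixes g :: "nat \<Rightarrow> complex"
  shows  "(\<Sum>i<a*b. g i) = (\<Sum>p<a. \<Sum>q<b. g (p*b+q))"
proof -
  have "(\<Sum>i<a*b. g i) = (\<Sum>p<a. sum g {p*b..<p*b+b})"
    using sum.nat_group[of g b a] by simp
  also have "\<dots> = (\<Sum>p<a. \<Sum>q<b. g (p*b+q))"
  proof (rule sum.cong[OF refl])
    fix p assume "p \<in> {..<a}"
    have "sum g {0 + p*b..<b + p*b} = (\<Sum>q=0..<b. g (q + p*b))"
      by (rule sum.shift_bounds_nat_ivl)
    then show "sum g {p*b..<p*b+b} = (\<Sum>q<b. g (p*b+q))"
      by (simp add: atLeast0LessThan add.commute)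
  qed
  finally show ?thesis .
qed

lemma kron_carrier: "A \<in> carrier_mat a a \<Longrightarrow> B \<in> carrier_mat b b \<Longrightarrow> kron A B \<in> carrier_mat (a*b) (a*b)"
  by (simp add: kron_def)

lemma kron_index:
  "A \<in> carrier_mat a a \<Longrightarrow> B \<in> carrier_mat b b \<Longrightarrow> i < a*b \<Longrightarrow> j < a*b \<Longrightarrow>
   kron A B $$ (i,j) = A $$ (i div b, j div b) * B $$ (i mod b, j mod b)"
  by (simp add: kron_def)

lemma kron_index2:
  assumes "A \<in> carrier_mat a a" "B \<in> carrier_mat b b" "p < a" "q < b" "r < a" "s < b"
  shows "kron A B $$ (p*b+q, r*b+s) = A $$ (p, r) * B $$ (q, s)"
proof -
  have lt: "x*b+y < a*b" if "x < a" "y < b" for x y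
  proof -
    have "x*b+y < (x+1)*b" using that by simp
    also have "(x+1)*b \<le> a*b" using that by (intro mult_right_mono) auto
    finally show ?thesis .
  qed
  have "p*b+q < a*b" "r*b+s < a*b" using assms lt by auto
  then show ?thesis using assms by (simp add: kron_index)
qed

lemma reorder5:
  fixes V W :: "'p \<Rightarrow> 'q \<Rightarrow> complex" and \<alpha> :: "'m \<Rightarrow> 'p \<Rightarrow> complex" and B :: "'q \<Rightarrow> 'q \<Rightarrow> complex"
  shows "(\<Sum>p\<in>P. \<Sum>q\<in>Q. \<Sum>r\<in>P'. \<Sum>s\<in>Q'. cnj (V p q) * (\<Sum>m\<in>M. \<alpha> m p * cnj (\<alpha> m r)) * B q s * V r s)
   = (\<Sum>m\<in>M. \<Sum>q\<in>Q. \<Sum>s\<in>Q'. cnj (\<Sum>p\<in>P. cnj (\<alpha> m p) * V p q) * B q s * (\<Sum>r\<in>P'. cnj (\<alpha> m r) * V r s))"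
  by (simp add: sum_distrib_left sum_distrib_right sum.swap[where B=M]
      sum.swap[where A=P and B=Q] sum.swap[where A=P and B=Q'] sum.swap[where A=P' and B=Q]
      sum.swap[where A=P' and B=Q'] sum.swap[where A=Q' and B=Q] sum.swap[where A=P' and B=P] mult_ac)

lemma psd_kron:
  assumes A: "psd a A" and B: "psd b B"
  shows "psd (a*b) (kron A B)"
proof -
  have Ac: "A \<in> carrier_mat a a" and hA: "\<forall>i<a. \<forall>j<a. A $$ (i,j) = cnj (A $$ (j,i))"
    and pA: "\<forall>v. 0 \<le> fq a (\<lambda>i j. A $$ (i,j)) v" using A unfolding psd_iff by blast+
  have Bc: "B \<in> carrier_mat b b" and hB: "\<forall>i<b. \<forall>j<b. B $$ (i,j) = cnj (B $$ (j,i))"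
    and pB: "\<forall>v. 0 \<le> fq b (\<lambda>i j. B $$ (i,j)) v" using B unfolding psd_iff by blast+
  show ?thesis unfolding psd_iff
  proof (intro conjI allI impI)
    show "kron A B \<in> carrier_mat (a*b) (a*b)" using Ac Bc by (rule kron_carrier)
  next
    fix i j assume i: "i < a*b" and j: "j < a*b"
    have b0: "b > 0" using i by (cases "b = 0") auto
    have id: "i div b < a" "j div b < a" using i j by (simp_all add: less_mult_imp_div_less)
    have im: "i mod b < b" "j mod b < b" using b0 by simp_all
    have "A $$ (i div b, j div b) = cnj (A $$ (j div b, i div b))" using hA id by blast
    moreover have "B $$ (i mod b, j mod b) = cnj (B $$ (j mod b, i mod b))" using hB im by blast
    ultimately show "kron A B $$ (i,j) = cnj (kron A B $$ (j,i))"
      using kron_index[OF Ac Bc i j] kron_index[OF Ac Bc j i] by simp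
  next
    fix v :: "nat \<Rightarrow> complex"
    define V where "V p q = v (p*b+q)" for p q
    obtain \<alpha> where \<alpha>: "\<forall>i<a. \<forall>j<a. A $$ (i,j) = (\<Sum>m<a. \<alpha> m i * cnj (\<alpha> m j))"
      using chol[OF hA pA] by blast
    define W where "W m q = (\<Sum>p<a. cnj (\<alpha> m p) * V p q)" for m q
    have "fq (a*b) (\<lambda>i j. kron A B $$ (i,j)) v
        = (\<Sum>p<a. \<Sum>q<b. \<Sum>r<a. \<Sum>s<b. cnj (v (p*b+q)) * kron A B $$ (p*b+q, r*b+s) * v (r*b+s))"
      unfolding fq_def sum_pair_index[of _ a b] by simp
    also have "\<dots> = (\<Sum>p<a. \<Sum>q<b. \<Sum>r<a. \<Sum>s<b. cnj (V p q) * (\<Sum>m<a. \<alpha> m p * cnj (\<alpha> m r)) * B $$ (q,s) * V r s)"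
    proof (intro sum.cong refl)
      fix p q r s assume "p \<in> {..<a}" "q \<in> {..<b}" "r \<in> {..<a}" "s \<in> {..<b}"
      then have p: "p < a" "q < b" "r < a" "s < b" by auto
      show "cnj (v (p*b+q)) * kron A B $$ (p*b+q, r*b+s) * v (r*b+s)
          = cnj (V p q) * (\<Sum>m<a. \<alpha> m p * cnj (\<alpha> m r)) * B $$ (q,s) * V r s"
        unfolding kron_index2[OF Ac Bc p] V_def using \<alpha> p(1,3) by simp
    qed
    also have "\<dots> = (\<Sum>m<a. \<Sum>q<b. \<Sum>s<b. cnj (W m q) * B $$ (q,s) * W m s)"
      unfolding W_def by (rule reorder5)
    also have "\<dots> = (\<Sum>m<a. fq b (\<lambda>i j. B $$ (i,j)) (W m))"
      unfolding fq_def by simp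
    also have "0 \<le> \<dots>" using pB by (intro sum_nonneg) blast
    finally show "0 \<le> fq (a*b) (\<lambda>i j. kron A B $$ (i,j)) v" .
  qed
qed

lemma kraus_carrier[simp]: "kraus_apply d Ks A \<in> carrier_mat d d"
  by (simp add: kraus_apply_def)

lemma msum_cong: "(\<And>x. x \<in> S \<Longrightarrow> f x = g x) \<Longrightarrow> msum d f S = msum d g S"
  unfolding msum_def by (intro cong_mat refl) (auto intro!: sum.cong)

lemma kraus_msum:
  assumes K: "\<forall>K\<in>set Ks. K \<in> carrier_mat d n" and f: "\<forall>x\<in>S. f x \<in> carrier_mat n n"
  shows "kraus_apply d Ks (msum n f S) = msum d (\<lambda>x. kraus_apply d Ks (f x)) S"
proof (rule eq_matI)
  show "dim_row (kraus_apply d Ks (msum n f S)) = dim_row (msum d (\<lambda>x. kraus_apply d Ks (f x)) S)"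
    "dim_col (kraus_apply d Ks (msum n f S)) = dim_col (msum d (\<lambda>x. kraus_apply d Ks (f x)) S)"
    by (simp_all add: kraus_apply_def msum_def)
  fix i j assume "i < dim_row (msum d (\<lambda>x. kraus_apply d Ks (f x)) S)" "j < dim_col (msum d (\<lambda>x. kraus_apply d Ks (f x)) S)"
  then have i: "i < d" and j: "j < d" by (simp_all add: msum_def)
  have Kk: "Ks ! k \<in> carrier_mat d n" if "k \<in> {..<length Ks}" for k using K that by auto
  have "kraus_apply d Ks (msum n f S) $$ (i,j)
      = (\<Sum>k<length Ks. \<Sum>p<n. \<Sum>q<n. Ks ! k $$ (i,p) * (\<Sum>x\<in>S. f x $$ (p,q)) * cnj (Ks ! k $$ (j,q)))"
    unfolding kraus_apply_def msum_index[OF i j]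
    by (intro sum.cong refl) (simp add: conj_index[OF Kk _ i j] msum_index)
  also have "\<dots> = (\<Sum>x\<in>S. \<Sum>k<length Ks. \<Sum>p<n. \<Sum>q<n. Ks ! k $$ (i,p) * f x $$ (p,q) * cnj (Ks ! k $$ (j,q)))"
    by (simp add: sum_distrib_left sum_distrib_right sum.swap[where B=S])
  also have "\<dots> = msum d (\<lambda>x. kraus_apply d Ks (f x)) S $$ (i,j)"
    unfolding msum_index[OF i j] kraus_apply_def
    by (intro sum.cong refl) (simp add: msum_index[OF i j] conj_index[OF Kk _ i j] f)
  finally show "kraus_apply d Ks (msum n f S) $$ (i,j) = msum d (\<lambda>x. kraus_apply d Ks (f x)) S $$ (i,j)" .
qed

lemma kron_one: "kron (1\<^sub>m a) (1\<^sub>m b) = 1\<^sub>m (a*b)"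
proof (rule eq_matI)
  fix i j assume "i < dim_row (1\<^sub>m (a*b) :: complex mat)" "j < dim_col (1\<^sub>m (a*b) :: complex mat)"
  then have i: "i < a*b" and j: "j < a*b" by simp_all
  have b0: "b > 0" using i by (cases "b = 0") auto
  have id: "i div b < a" "j div b < a" using i j by (simp_all add: less_mult_imp_div_less)
  have im: "i mod b < b" "j mod b < b" using b0 by simp_all
  have eq: "i = j \<longleftrightarrow> i div b = j div b \<and> i mod b = j mod b" by (metis div_mult_mod_eq)
  show "kron (1\<^sub>m a) (1\<^sub>m b) $$ (i,j) = 1\<^sub>m (a*b) $$ (i,j)"
    using kron_index[OF one_carrier_mat one_carrier_mat i j] id im i j eq by simp
qed (simp_all add: kron_def)

lemma bij_PiE_split:
  assumes disj: "S1 \<inter> S2 = {}"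
  shows "bij_betw (\<lambda>x. (restrict x S1, restrict x S2)) (PiE (S1 \<union> S2) \<Omega>) (PiE S1 \<Omega> \<times> PiE S2 \<Omega>)"
proof (rule bij_betwI[where g = "\<lambda>(y,z) k. if k \<in> S1 then y k else z k"])
  show "(\<lambda>x. (restrict x S1, restrict x S2)) \<in> PiE (S1 \<union> S2) \<Omega> \<rightarrow> PiE S1 \<Omega> \<times> PiE S2 \<Omega>"
    by auto
  show "(\<lambda>(y,z) k. if k \<in> S1 then y k else z k) \<in> PiE S1 \<Omega> \<times> PiE S2 \<Omega> \<rightarrow> PiE (S1 \<union> S2) \<Omega>"
    by (auto simp: PiE_def extensional_def Pi_def)
  show "(\<lambda>(y,z) k. if k \<in> S1 then y k else z k) (restrict x S1, restrict x S2) = x"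
    if "x \<in> PiE (S1 \<union> S2) \<Omega>" for x
    using that by (auto simp: PiE_def extensional_def fun_eq_iff)
  show "(restrict ((\<lambda>(y,z) k. if k \<in> S1 then y k else z k) yz) S1,
         restrict ((\<lambda>(y,z) k. if k \<in> S1 then y k else z k) yz) S2) = yz"
    if "yz \<in> PiE S1 \<Omega> \<times> PiE S2 \<Omega>" for yz
    using that disj by (cases yz) (auto simp: PiE_def extensional_def fun_eq_iff)
qed

lemma bij_PiE_single:
  "bij_betw (\<lambda>x. x k) (PiE {k} \<Omega>) (\<Omega> k)"
proof (rule bij_betwI[where g = "\<lambda>y. restrict (\<lambda>_. y) {k}"])
  show "(\<lambda>x. x k) \<in> PiE {k} \<Omega> \<rightarrow> \<Omega> k" by auto
  show "(\<lambda>y. restrict (\<lambda>_. y) {k}) \<in> \<Omega> k \<rightarrow> PiE {k} \<Omega>" by auto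
  show "restrict (\<lambda>_. x k) {k} = x" if "x \<in> PiE {k} \<Omega>" for x
    using that by (auto simp: PiE_def extensional_def fun_eq_iff)
  show "restrict (\<lambda>_. y) {k} k = y" for y by simp
qed

lemma msum_kron_PiE:
  assumes disj: "S1 \<inter> S2 = {}"
    and F: "\<forall>y\<in>PiE S1 \<Omega>. F y \<in> carrier_mat a a" and G: "\<forall>z\<in>PiE S2 \<Omega>. G z \<in> carrier_mat b b"
  shows "msum (a*b) (\<lambda>x. kron (F (restrict x S1)) (G (restrict x S2))) (PiE (S1 \<union> S2) \<Omega>)
       = kron (msum a F (PiE S1 \<Omega>)) (msum b G (PiE S2 \<Omega>))"
proof (rule eq_matI)
  show "dim_row (msum (a*b) (\<lambda>x. kron (F (restrict x S1)) (G (restrict x S2))) (PiE (S1 \<union> S2) \<Omega>))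
     = dim_row (kron (msum a F (PiE S1 \<Omega>)) (msum b G (PiE S2 \<Omega>)))"
    "dim_col (msum (a*b) (\<lambda>x. kron (F (restrict x S1)) (G (restrict x S2))) (PiE (S1 \<union> S2) \<Omega>))
     = dim_col (kron (msum a F (PiE S1 \<Omega>)) (msum b G (PiE S2 \<Omega>)))"
    by (simp_all add: kron_def msum_def)
  fix i j assume "i < dim_row (kron (msum a F (PiE S1 \<Omega>)) (msum b G (PiE S2 \<Omega>)))"
    "j < dim_col (kron (msum a F (PiE S1 \<Omega>)) (msum b G (PiE S2 \<Omega>)))"
  then have i: "i < a*b" and j: "j < a*b" by (simp_all add: kron_def msum_def)
  have b0: "b > 0" using i by (cases "b = 0") auto
  have id: "i div b < a" "j div b < a" using i j by (simp_all add: less_mult_imp_div_less)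
  have im: "i mod b < b" "j mod b < b" using b0 by simp_all
  define h where "h yz = F (fst yz) $$ (i div b, j div b) * G (snd yz) $$ (i mod b, j mod b)" for yz
  have "msum (a*b) (\<lambda>x. kron (F (restrict x S1)) (G (restrict x S2))) (PiE (S1 \<union> S2) \<Omega>) $$ (i,j)
      = (\<Sum>x\<in>PiE (S1 \<union> S2) \<Omega>. h (restrict x S1, restrict x S2))"
  proof -
    have "restrict x S1 \<in> PiE S1 \<Omega>" "restrict x S2 \<in> PiE S2 \<Omega>" if "x \<in> PiE (S1 \<union> S2) \<Omega>" for x
      using that by auto
    then show ?thesis unfolding msum_index[OF i j] h_def
      by (intro sum.cong refl) (simp add: kron_index[OF _ _ i j] F G)
  qed
  also have "\<dots> = (\<Sum>yz\<in>PiE S1 \<Omega> \<times> PiE S2 \<Omega>. h yz)"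
    by (rule sum.reindex_bij_betw[OF bij_PiE_split[OF disj], of h])
  also have "\<dots> = (\<Sum>y\<in>PiE S1 \<Omega>. F y $$ (i div b, j div b)) * (\<Sum>z\<in>PiE S2 \<Omega>. G z $$ (i mod b, j mod b))"
    unfolding h_def sum_product sum.cartesian_product by (intro sum.cong refl) (simp add: split_beta)
  also have "\<dots> = kron (msum a F (PiE S1 \<Omega>)) (msum b G (PiE S2 \<Omega>)) $$ (i,j)"
    by (simp add: kron_index[OF msum_carrier msum_carrier i j] msum_index[OF id] msum_index[OF im])
  finally show "msum (a*b) (\<lambda>x. kron (F (restrict x S1)) (G (restrict x S2))) (PiE (S1 \<union> S2) \<Omega>) $$ (i,j)
      = kron (msum a F (PiE S1 \<Omega>)) (msum b G (PiE S2 \<Omega>)) $$ (i,j)" .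
qed

lemma eval_local:
  "(\<forall>k\<in>set (leaves C). x k = y k) \<Longrightarrow> eval C x = eval C y"
  by (induction C) auto

lemma eval_restrict:
  "set (leaves C) \<subseteq> S \<Longrightarrow> eval C (restrict x S) = eval C x"
  by (rule eval_local) auto

lemma main_lemma:
  "pos_unital \<Omega> C \<Longrightarrow> distinct (leaves C) \<Longrightarrow>
   (\<forall>x\<in>PiE (set (leaves C)) \<Omega>. psd (cdim C) (eval C x)) \<and>
   msum (cdim C) (eval C) (PiE (set (leaves C)) \<Omega>) = 1\<^sub>m (cdim C)"
proof (induction C)
  case (Leaf k d E)
  then have P: "povm d E (\<Omega> k)" by simp
  have "msum d (\<lambda>x. E (x k)) (PiE {k} \<Omega>) = msum d E (\<Omega> k)"
    unfolding msum_def
    by (intro cong_mat refl) (auto intro!: sum.reindex_bij_betw[OF bij_PiE_single])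
  then show ?case using P unfolding povm_def by auto
next
  case (Node d Ks l r)
  define S1 where "S1 = set (leaves l)"
  define S2 where "S2 = set (leaves r)"
  define a where "a = cdim l"
  define b where "b = cdim r"
  have disj: "S1 \<inter> S2 = {}" and dl: "distinct (leaves l)" and dr: "distinct (leaves r)"
    using Node.prems(2) by (auto simp: S1_def S2_def)
  have pu: "pos_unital \<Omega> l" "pos_unital \<Omega> r" and qo: "quantum_op (a*b) d Ks"
    and un: "kraus_apply d Ks (1\<^sub>m (a*b)) = 1\<^sub>m d"
    using Node.prems(1) by (auto simp: a_def b_def)
  have K: "\<forall>K\<in>set Ks. K \<in> carrier_mat d (a*b)" using qo unfolding quantum_op_def by blast
  have IHl: "\<forall>x\<in>PiE S1 \<Omega>. psd a (eval l x)" "msum a (eval l) (PiE S1 \<Omega>) = 1\<^sub>m a"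
    using Node.IH(1)[OF pu(1) dl] by (simp_all add: S1_def a_def)
  have IHr: "\<forall>x\<in>PiE S2 \<Omega>. psd b (eval r x)" "msum b (eval r) (PiE S2 \<Omega>) = 1\<^sub>m b"
    using Node.IH(2)[OF pu(2) dr] by (simp_all add: S2_def b_def)
  have S: "set (leaves (Node d Ks l r)) = S1 \<union> S2" by (simp add: S1_def S2_def)
  have el: "eval l x = eval l (restrict x S1)" for x by (rule eval_restrict[symmetric]) (simp add: S1_def)
  have er: "eval r x = eval r (restrict x S2)" for x by (rule eval_restrict[symmetric]) (simp add: S2_def)
  have kpsd: "psd (a*b) (kron (eval l x) (eval r x))" if "x \<in> PiE (S1 \<union> S2) \<Omega>" for x
  proof -
    have "restrict x S1 \<in> PiE S1 \<Omega>" "restrict x S2 \<in> PiE S2 \<Omega>" using that by auto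
    then have "psd a (eval l x)" "psd b (eval r x)" using IHl(1) IHr(1) el er by metis+
    then show ?thesis by (rule psd_kron)
  qed
  have Fc: "\<forall>y\<in>PiE S1 \<Omega>. eval l y \<in> carrier_mat a a" using IHl(1) unfolding psd_def by blast
  have Gc: "\<forall>z\<in>PiE S2 \<Omega>. eval r z \<in> carrier_mat b b" using IHr(1) unfolding psd_def by blast
  have "msum d (eval (Node d Ks l r)) (PiE (S1 \<union> S2) \<Omega>)
      = msum d (\<lambda>x. kraus_apply d Ks (kron (eval l x) (eval r x))) (PiE (S1 \<union> S2) \<Omega>)"
    by (rule msum_cong) simp
  also have "\<dots> = kraus_apply d Ks (msum (a*b) (\<lambda>x. kron (eval l x) (eval r x)) (PiE (S1 \<union> S2) \<Omega>))"
    using kpsd unfolding psd_def by (intro kraus_msum[symmetric] K) blast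
  also have "msum (a*b) (\<lambda>x. kron (eval l x) (eval r x)) (PiE (S1 \<union> S2) \<Omega>)
      = msum (a*b) (\<lambda>x. kron (eval l (restrict x S1)) (eval r (restrict x S2))) (PiE (S1 \<union> S2) \<Omega>)"
    using el er by metis
  also have "\<dots> = kron (msum a (eval l) (PiE S1 \<Omega>)) (msum b (eval r) (PiE S2 \<Omega>))"
    by (rule msum_kron_PiE[OF disj Fc Gc])
  also have "\<dots> = 1\<^sub>m (a*b)" by (simp add: IHl(2) IHr(2) kron_one)
  finally have "msum d (eval (Node d Ks l r)) (PiE (S1 \<union> S2) \<Omega>) = kraus_apply d Ks (1\<^sub>m (a*b))" .
  note sum1 = trans[OF this un]
  have psdN: "psd d (eval (Node d Ks l r) x)" if "x \<in> PiE (S1 \<union> S2) \<Omega>" for x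
    using psd_kraus[OF K kpsd[OF that]] by simp
  show ?case unfolding S cdim.simps using sum1 psdN by blast
qed

theorem proposition4:
  fixes N :: nat and \<Omega> :: "nat \<Rightarrow> 'a set" and C :: "'a circ"
  assumes "\<And>k. k < N \<Longrightarrow> finite (\<Omega> k)"
    and "partition_circ N C"
    and "pos_unital \<Omega> C"
  shows "povm (cdim C) (eval C) (PiE {..<N} \<Omega>)"
proof -
  have d: "distinct (leaves C)" and s: "set (leaves C) = {..<N}" using assms(2) unfolding partition_circ_def by auto
  have "finite (PiE {..<N} \<Omega>)" using assms(1) by (intro finite_PiE) auto
  then show ?thesis using main_lemma[OF assms(3) d] unfolding s povm_def by blast
qed

end
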